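(* Let $n\ge 2$, $m\ge 1$, and let $\underline{q}_k<\overline{q}_k$ be real numbers, $k=1,\dots,m$; put $\mathbf{Q}=\prod_{k=1}^m[\underline{q}_k,\overline{q}_k]$. Let $A(\mathbf{q})=(a_{ij}(\mathbf{q}))_{n\times n}$, $\mathbf{q}=(q_1,\dots,q_m)^T$, where each $a_{ij}$ is a real rational function whose denominator does not vanish on $\mathbf{Q}$, and let $\mathbf{A}=\{A(\mathbf{q}):\mathbf{q}\in\mathbf{Q}\}$. Assume that $A(\mathbf{q}^* )$ is Hurwitz stable for at least one $\mathbf{q}^*\in\mathbf{Q}$. Let $a_0(\mathbf{q})$ be the constant coefficient of $\det(sI_n-A(\mathbf{q}))$ and $\Delta_{n-1}(\mathbf{q})$ the $(n-1)$-th leading principal minor of its Hurwitz matrix; both are rational functions of $\mathbf{q}$. Write $a_0=N_1/D_1$ and $\Delta_{n-1}=N_2/D_2$ with polynomials $N_i,D_i$ such that $D_i$ does not vanish on $\mathbf{Q}$, and set $f_i=N_iD_i$ ($i=1,2$). Let $g_i(x_1,\dots,x_m)=f_i(\underline{q}_1+(\overline{q}_1-\underline{q}_1)x_1,\dots,\underline{q}_m+(\overline{q}_m-\underline{q}_m)x_m)$, and let $h_i(q_0,x_1,\dots,x_m)=q_0^{\deg g_i}\,g_i(x_1/q_0,\dots,x_m/q_0)$ be its homogenization. Enumerate the $m!$ permutations of $\{1,\dots,m\}$ as $\theta_j=(j_1j_2\dots j_m)$, $j=1,\dots,m!$. Working in $\mathbb{R}^{m+1}$ with coordinates indexed $0,1,\dots,m$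 and unit vectors $\mathbf{e}_0,\dots,\mathbf{e}_m$, let $V_j$ be the $(m+1)\times(m+1)$ matrix with columns $\mathbf{v}_{j0}=\mathbf{e}_0$ and $\mathbf{v}_{jk}=\mathbf{e}_0+\mathbf{e}_{j_1}+\cdots+\mathbf{e}_{j_k}$ for $k=1,\dots,m$ (these are the nonzero vertices of $\{1\ge q_0\ge x_{j_1}\ge\cdots\ge x_{j_m}\ge 0\}$), and define the forms $\hat h_{ij}(\hat{\mathbf{q}})=h_i(V_j\hat{\mathbf{q}})$, $\hat{\mathbf{q}}\in\mathbb{R}^{m+1}$. Then $\mathbf{A}$ is robustly Hurwitz stable if and only if the following $2\,m!$ conditions hold: $\hat h_{ij}(\hat{\mathbf{q}})>0$ for all $\hat{\mathbf{q}}\in\tilde S_{m+1}$, for $i=1,2$ and $j=1,\dots,m!$.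
   Context: A real square matrix is Hurwitz stable if all its eigenvalues lie in the open left half of the complex plane; a set of matrices is robustly Hurwitz stable if each of its members is Hurwitz stable. The Hurwitz matrix of $s^n+a_{n-1}s^{n-1}+\cdots+a_0$ is the $n\times n$ matrix $(h_{ij})$ with $h_{ij}=a_{n-2j+i}$, where $a_n=1$ and $a_k=0$ for $k<0$ or $k>n$. $\tilde S_{m+1}=\{(t_0,\dots,t_m)\in\mathbb{R}^{m+1}:\sum_i t_i=1,\ t_i\ge 0\}$ is the standard simplex. *)

theory Defs
  imports "HOL-Library.Poly_Mapping" "HOL-Combinatorics.Permutations"
    "Jordan_Normal_Form.Determinant" "Jordan_Normal_Form.Char_Poly"
begin

type_synonym mpoly = "(nat \<Rightarrow>\<^sub>0 nat) \<Rightarrow>\<^sub>0 real"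

definition mpoly_eval :: "mpoly \<Rightarrow> (nat \<Rightarrow> real) \<Rightarrow> real" where
  "mpoly_eval p x = (\<Sum>mn\<in>Poly_Mapping.keys p. Poly_Mapping.lookup p mn * (\<Prod>i\<in>Poly_Mapping.keys mn. x i ^ Poly_Mapping.lookup mn i))"

definition mpoly_vars :: "mpoly \<Rightarrow> nat set" where
  "mpoly_vars p = \<Union> (Poly_Mapping.keys ` Poly_Mapping.keys p)"

text \<open>Total degree of a monomial and of a polynomial (the zero polynomial gets degree 0).\<close>
definition mon_deg :: "(nat \<Rightarrow>\<^sub>0 nat) \<Rightarrow> nat" where
  "mon_deg mn = (\<Sum>i\<in>Poly_Mapping.keys mn. Poly_Mapping.lookup mn i)"

definition mpoly_deg :: "mpoly \<Rightarrow> nat" where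
  "mpoly_deg p = Max (insert 0 (mon_deg ` Poly_Mapping.keys p))"

definition mpoly_subst :: "(nat \<Rightarrow> mpoly) \<Rightarrow> mpoly \<Rightarrow> mpoly" where
  "mpoly_subst s p = (\<Sum>mn\<in>Poly_Mapping.keys p. Poly_Mapping.single 0 (Poly_Mapping.lookup p mn) * (\<Prod>i\<in>Poly_Mapping.keys mn. s i ^ Poly_Mapping.lookup mn i))"

definition mpoly_var :: "nat \<Rightarrow> mpoly" where
  "mpoly_var i = Poly_Mapping.single (Poly_Mapping.single i 1) 1"

definition mpoly_const :: "real \<Rightarrow> mpoly" where
  "mpoly_const c = Poly_Mapping.single 0 c"

definition affine_change :: "(nat \<Rightarrow> real) \<Rightarrow> (nat \<Rightarrow> real) \<Rightarrow> mpoly \<Rightarrow> mpoly" where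
  "affine_change ql qu f =
     mpoly_subst (\<lambda>k. mpoly_const (ql k) + mpoly_const (qu k - ql k) * mpoly_var k) f"

text \<open>Homogenization with respect to the new variable with index 0 (the polynomials
  homogenized here only involve variables 1..m):
  h(q_0,x_1,...,x_m) = q_0^(deg g) g(x_1/q_0, ..., x_m/q_0).\<close>
definition homogenize :: "mpoly \<Rightarrow> mpoly" where
  "homogenize g = (\<Sum>mn\<in>Poly_Mapping.keys g.
      Poly_Mapping.single (mn + Poly_Mapping.single 0 (mpoly_deg g - mon_deg mn)) (Poly_Mapping.lookup g mn))"

definition hurwitz_stable :: "real mat \<Rightarrow> bool" where
  "hurwitz_stable A \<longleftrightarrow> (\<forall>z. eigenvalue (map_mat complex_of_real A) z \<longrightarrow> Re z < 0)"

definition hurwitz_matrix :: "real poly \<Rightarrow> real mat" where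
  "hurwitz_matrix p = (let n = degree p in
     mat n n (\<lambda>(i,j). let k = int n - 2 * (int j + 1) + (int i + 1) in
                       if 0 \<le> k \<and> k \<le> int n then coeff p (nat k) else 0))"

definition lead_minor :: "real mat \<Rightarrow> nat \<Rightarrow> real" where
  "lead_minor H k = det (mat k k (\<lambda>(i,j). H $$ (i,j)))"

definition box :: "nat \<Rightarrow> (nat \<Rightarrow> real) \<Rightarrow> (nat \<Rightarrow> real) \<Rightarrow> (nat \<Rightarrow> real) set" where
  "box m ql qu = {q. (\<forall>k\<in>{1..m}. ql k \<le> q k \<and> q k \<le> qu k) \<and> (\<forall>k. k \<notin> {1..m} \<longrightarrow> q k = 0)}"

definition std_simplex :: "nat \<Rightarrow> real vec set" where
  "std_simplex m = {t \<in> carrier_vec (m+1). (\<forall>i<m+1. 0 \<le> t $ i) \<and> (\<Sum>i<m+1. t $ i) = 1}"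

definition vertex_matrix :: "nat \<Rightarrow> (nat \<Rightarrow> nat) \<Rightarrow> real mat" where
  "vertex_matrix m \<theta> = mat (m+1) (m+1)
     (\<lambda>(r,k). if r = 0 \<or> r \<in> \<theta> ` {1..k} then 1 else 0)"

definition vec_point :: "nat \<Rightarrow> real vec \<Rightarrow> (nat \<Rightarrow> real)" where
  "vec_point m y = (\<lambda>r. if r \<le> m then y $ r else 0)"

end

theory Submission
  imports Defs
begin


definition cf :: "'a::comm_ring_1 poly \<Rightarrow> int \<Rightarrow> 'a" where
  "cf p k = (if k < 0 then 0 else coeff p (nat k))"

definition HM :: "'a::comm_ring_1 poly \<Rightarrow> nat \<Rightarrow> nat \<Rightarrow> 'a mat" where
  "HM p d k = mat k k (\<lambda>(i,j). cf p (int d - 1 + int i - 2 * int j))"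

definition HD :: "'a::comm_ring_1 poly \<Rightarrow> nat \<Rightarrow> nat \<Rightarrow> 'a" where
  "HD p d k = det (HM p d k)"

definition CM :: "(nat \<Rightarrow> 'a::comm_ring_1) \<Rightarrow> 'a \<Rightarrow> nat \<Rightarrow> 'a mat" where
  "CM w c N = mat N N (\<lambda>(i,j). if i = 0 then w j else if j + 1 = i then 1 else if j = i then c else 0)"

lemma det_CM:
  assumes "N \<ge> 1"
  shows "det (CM w c N) = (\<Sum>k<N. (-1)^k * w k * c^(N-1-k))"
  using assms
proof (induction N rule: nat_induct_at_least)
  case base
  have "CM w c 1 = mat 1 1 (\<lambda>_. w 0)" unfolding CM_def by (rule eq_matI) auto
  then show ?case by (simp add: det_def' [of _ 1] )
next
  case (Suc N)
  let ?C = "CM w c (Suc N)"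
  have C0: "?C \<in> carrier_mat (Suc N) (Suc N)" unfolding CM_def by auto
  have md1: "mat_delete ?C N N = CM w c N"
    unfolding CM_def mat_delete_def by (rule eq_matI) auto
  have md2: "det (mat_delete ?C 0 N) = 1"
  proof -
    let ?D = "mat_delete ?C 0 N"
    have D: "?D \<in> carrier_mat N N" using mat_delete_carrier[OF C0] by simp
    have ut: "upper_triangular ?D"
      unfolding upper_triangular_def mat_delete_def CM_def by auto
    have "det ?D = prod_list (diag_mat ?D)" by (rule det_upper_triangular[OF ut D])
    also have "\<dots> = 1" unfolding prod_list_diag_prod using D
      by (auto simp: mat_delete_def CM_def intro!: prod.neutral)
    finally show ?thesis .
  qed
  have C: "?C \<in> carrier_mat (Suc N) (Suc N)" unfolding CM_def by auto
  have "det ?C = (\<Sum>i<Suc N. ?C $$ (i,N) * cofactor ?C i N)"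
    by (rule laplace_expansion_column[OF C]) auto
  also have "\<dots> = (\<Sum>i\<in>{0,N}. ?C $$ (i,N) * cofactor ?C i N)"
    by (rule sum.mono_neutral_right) (use Suc in \<open>auto simp: CM_def\<close>)
  also have "\<dots> = w N * cofactor ?C 0 N + c * cofactor ?C N N"
    using Suc by (simp add: CM_def)
  finally have "det ?C = w N * (-1)^N + c * det (CM w c N)"
    unfolding cofactor_def md1 md2 by simp
  also have "\<dots> = (\<Sum>k<Suc N. (-1)^k * w k * c^(Suc N-1-k))"
  proof -
    have "c * (\<Sum>k<N. (-1)^k * w k * c^(N-1-k)) = (\<Sum>k<N. (-1)^k * w k * c^(N-k))"
      unfolding sum_distrib_left
    proof (rule sum.cong[OF refl])
      fix k assume "k \<in> {..<N}"
      then have "N - k = Suc (N - 1 - k)" by auto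
      then show "c * ((-1)^k * w k * c^(N-1-k)) = (-1)^k * w k * c^(N-k)" by simp
    qed
    then show ?thesis unfolding Suc.IH by (simp add: algebra_simps)
  qed
  finally show ?case .
qed



lemma cf_beyond: "k > int (degree q) \<Longrightarrow> cf q k = 0"
  unfolding cf_def by (auto intro!: coeff_eq_0)

lemma REL_int:
  fixes q :: "'a::field_char_0 poly"
  assumes S: "odd S" and D: "int (degree q) \<le> D"
  shows "(\<Sum>a\<in>{0..D}. (if even a then 1 else -1) * cf q a * cf q (S - a)) = 0"
proof -
  define g where "g a = (if even a then 1 else -1) * cf q a * cf q (S - a)" for a
  define J where "J = {a. 0 \<le> a \<and> a \<le> D \<and> 0 \<le> S - a \<and> S - a \<le> D}"
  have fJ: "finite J" unfolding J_def by (rule finite_subset[of _ "{0..D}"]) auto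
  have e1: "(\<Sum>a\<in>{0..D}. g a) = (\<Sum>a\<in>J. g a)"
  proof (rule sum.mono_neutral_right)
    show "J \<subseteq> {0..D}" unfolding J_def by auto
    show "\<forall>i\<in>{0..D} - J. g i = 0"
    proof
      fix i assume "i \<in> {0..D} - J"
      then have "S - i < 0 \<or> S - i > int (degree q)" using D unfolding J_def by auto
      then have "cf q (S - i) = 0" using cf_beyond[of q "S - i"] by (auto simp: cf_def)
      then show "g i = 0" unfolding g_def by simp
    qed
  qed simp
  have "(\<Sum>a\<in>J. g a) = (\<Sum>a\<in>J. g (S - a))"
    by (rule sum.reindex_bij_witness[of _ "\<lambda>a. S - a" "\<lambda>a. S - a"]) (auto simp: J_def)
  also have "\<dots> = (\<Sum>a\<in>J. - g a)"
  proof (rule sum.cong[OF refl])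
    fix a
    have "even (S - a) \<longleftrightarrow> \<not> even a" using S by (simp add: even_diff)
    then show "g (S - a) = - g a" unfolding g_def by auto
  qed
  also have "\<dots> = - (\<Sum>a\<in>J. g a)" by (simp add: sum_negf)
  finally have e2: "(\<Sum>a\<in>J. g a) = - (\<Sum>a\<in>J. g a)" .
  then have "(\<Sum>a\<in>J. g a) + (\<Sum>a\<in>J. g a) = 0" by (metis add.right_inverse)
  then have "(2::'a) * (\<Sum>a\<in>J. g a) = 0" by (metis mult_2)
  then have "(\<Sum>a\<in>J. g a) = 0" by simp
  with e1 show ?thesis unfolding g_def by simp
qed

lemma REL:
  fixes q :: "'a::field_char_0 poly"
  assumes N: "degree q = N"
  shows "(\<Sum>i<Suc N. (-1)^i * coeff q (N - i) * cf q (int N - 1 + int i - 2 * int j)) = 0"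
proof -
  define S where "S = 2 * int N - 1 - 2 * int j"
  have S: "odd S" unfolding S_def by presburger
  have "(\<Sum>a\<in>{0..int N}. (-1)^N * ((if even a then 1 else -1) * cf q a * cf q (S - a)))
     = (\<Sum>i<Suc N. (-1)^i * coeff q (N - i) * cf q (int N - 1 + int i - 2 * int j))"
  proof (rule sum.reindex_bij_witness[of _ "\<lambda>i. int N - int i" "\<lambda>a. nat (int N - a)"])
    fix a assume a: "a \<in> {0..int N}"
    show "nat (int N - a) \<in> {..<Suc N}" using a by auto
    show "int N - int (nat (int N - a)) = a" using a by auto
    have i: "int (nat (int N - a)) = int N - a" using a by auto
    have "nat a \<le> N" using a by auto
    moreover have "N - nat (int N - a) = nat a"
    proof -
      obtain b where b: "a = int b" using a by (metis atLeastAtMost_iff nonneg_int_cases)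
      then have "b \<le> N" using a by auto
      then show ?thesis unfolding b by (simp add: nat_diff_distrib)
    qed
    ultimately have c1: "coeff q (N - nat (int N - a)) = cf q a" unfolding cf_def using a
      by simp
    have c2: "cf q (int N - 1 + int (nat (int N - a)) - 2 * int j) = cf q (S - a)"
      unfolding i S_def by (simp add: algebra_simps)
    have c3: "((-1)::'a) ^ nat (int N - a) = (-1)^N * (if even a then 1 else -1)"
    proof -
      obtain b where b: "a = int b" using a by (metis atLeastAtMost_iff nonneg_int_cases)
      then have bN: "b \<le> N" using a by auto
      have "((-1)::'a) ^ nat (int N - a) * (-1) ^ nat a = (-1)^N"
      proof -
        have "nat (int N - a) + nat a = N" unfolding b using bN by linarith
        then show ?thesis by (metis power_add)
      qed
      moreover have "((-1)::'a) ^ nat a = (if even a then 1 else -1)"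
        unfolding b by simp
      ultimately show ?thesis
        by (cases "even a") (simp_all add: algebra_simps minus_equation_iff)
    qed
    show "(-1) ^ nat (int N - a) * coeff q (N - nat (int N - a)) *
      cf q (int N - 1 + int (nat (int N - a)) - 2 * int j) = 
      (-1)^N * ((if even a then 1 else -1) * cf q a * cf q (S - a))"
      unfolding c1 c2 c3 by simp
  qed auto
  then have "(\<Sum>i<Suc N. (-1)^i * coeff q (N - i) * cf q (int N - 1 + int i - 2 * int j))
     = (\<Sum>a\<in>{0..int N}. (-1)^N * ((if even a then 1 else -1) * cf q a * cf q (S - a)))" by simp
  also have "\<dots> = (-1)^N * (\<Sum>a\<in>{0..int N}. (if even a then 1 else -1) * cf q a * cf q (S - a))"
    by (simp add: sum_distrib_left)
  also have "\<dots> = 0" using REL_int[OF S, of q "int N"] N by simp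
  finally show ?thesis .
qed



lemma cf_lin: "cf ([:c,1:] * q) k = cf q (k - 1) + c * cf q k"
proof -
  have e: "[:c,1:] * q = Polynomial.smult c q + pCons 0 q" by (simp add: mult_pCons_left)
  show ?thesis
  proof (cases "k < 0")
    case True then show ?thesis by (simp add: cf_def)
  next
    case False
    then obtain n where n: "k = int n" by (metis nonneg_int_cases not_less)
    show ?thesis
    proof (cases n)
      case 0 then show ?thesis unfolding n e cf_def by simp
    next
      case (Suc m)
      have a: "int n - 1 = int m" using Suc by simp
      have "cf ([:c,1:] * q) (int n) = coeff ([:c,1:] * q) n" by (simp add: cf_def)
      also have "\<dots> = coeff q m + c * coeff q n" unfolding e Suc by simp
      finally show ?thesis unfolding n a by (simp add: cf_def)
    qed
  qed
qed

lemma KEY: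
  fixes q :: "'a::field_char_0 poly"
  assumes N: "degree q = N" and N1: "N \<ge> 1" and mon: "coeff q N = 1"
  shows "HD ([:c,1:] * q) (Suc N) N = HD q N (N - 1) * poly q c"
proof -
  define p where "p = [:c,1:] * q"
  define r where "r i j = cf q (int N - 1 + int i - 2 * int j)" for i j :: nat
  define y where "y i = (-1)^i * coeff q (N - i)" for i
  define w where "w j = (if j = 0 then c else 0) - y (Suc j)" for j
  define Rt where "Rt = mat N N (\<lambda>(i,j). r (Suc i) j)"
  define C where "C = CM w c N"
  have Rt: "Rt \<in> carrier_mat N N" unfolding Rt_def by simp
  have C: "C \<in> carrier_mat N N" unfolding C_def CM_def by simp
  have relj: "(\<Sum>k<N. y (Suc k) * r (Suc k) j) = - r 0 j" for j
  proof -
    have "(\<Sum>i<Suc N. y i * r i j) = 0" unfolding y_def r_def using REL[OF N, of j] by simp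
    then have "y 0 * r 0 j + (\<Sum>k<N. y (Suc k) * r (Suc k) j) = 0"
      unfolding sum.lessThan_Suc_shift .
    moreover have "y 0 = 1" unfolding y_def using mon by simp
    ultimately show ?thesis by (simp add: eq_neg_iff_add_eq_0 add.commute)
  qed
  have HMp: "HM p (Suc N) N = C * Rt"
  proof (rule eq_matI)
    show "dim_row (HM p (Suc N) N) = dim_row (C * Rt)" using C by (simp add: HM_def)
    show "dim_col (HM p (Suc N) N) = dim_col (C * Rt)" using Rt by (simp add: HM_def)
    fix i j assume i: "i < dim_row (C * Rt)" and j: "j < dim_col (C * Rt)"
    then have i: "i < N" and j: "j < N" using C Rt by auto
    have "HM p (Suc N) N $$ (i,j) = cf p (int (Suc N) - 1 + int i - 2 * int j)"
      unfolding HM_def using i j by simp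
    also have "\<dots> = cf q (int (Suc N) - 1 + int i - 2 * int j - 1) + c * cf q (int (Suc N) - 1 + int i - 2 * int j)"
      unfolding p_def by (rule cf_lin)
    also have "int (Suc N) - 1 + int i - 2 * int j - 1 = int N - 1 + int i - 2 * int j" by simp
    also have "int (Suc N) - 1 + int i - 2 * int j = int N - 1 + int (Suc i) - 2 * int j" by simp
    finally have lhs: "HM p (Suc N) N $$ (i,j) = r i j + c * r (Suc i) j"
      unfolding r_def .
    have rhs: "(C * Rt) $$ (i,j) = (\<Sum>k<N. C $$ (i,k) * r (Suc k) j)"
      using i j C Rt unfolding Rt_def by (auto simp: scalar_prod_def lessThan_atLeast0 intro!: sum.cong)
    show "HM p (Suc N) N $$ (i,j) = (C * Rt) $$ (i,j)"
    proof (cases "i = 0")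
      case True
      have "(\<Sum>k<N. C $$ (0,k) * r (Suc k) j) = (\<Sum>k<N. (if k = 0 then c * r (Suc k) j else 0)) - (\<Sum>k<N. y (Suc k) * r (Suc k) j)"
        unfolding sum_subtractf[symmetric] C_def CM_def w_def
        by (rule sum.cong) (auto simp: algebra_simps)
      also have "\<dots> = c * r 1 j + r 0 j" using N1 relj[of j] by simp
      finally show ?thesis using lhs rhs True by (simp add: algebra_simps)
    next
      case False
      have "(\<Sum>k<N. C $$ (i,k) * r (Suc k) j) = (\<Sum>k<N. (if k = i - 1 then r i j else 0) + (if k = i then c * r (Suc i) j else 0))"
        unfolding C_def CM_def using False i by (intro sum.cong) auto
      also have "\<dots> = r i j + c * r (Suc i) j" using False i by (simp add: sum.distrib)
      finally show ?thesis unfolding lhs rhs by simp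
    qed
  qed
  have dRt: "det Rt = HD q N (N - 1)"
  proof -
    have "det Rt = (\<Sum>i<N. Rt $$ (i,0) * cofactor Rt i 0)"
      by (rule laplace_expansion_column[OF Rt]) (use N1 in auto)
    also have "\<dots> = (\<Sum>i<N. if i = 0 then cofactor Rt 0 0 else 0)"
    proof (rule sum.cong[OF refl])
      fix i assume "i \<in> {..<N}"
      then have "Rt $$ (i,0) = (if i = 0 then 1 else 0)"
        unfolding Rt_def r_def cf_def using mon N by (auto intro!: coeff_eq_0)
      then show "Rt $$ (i,0) * cofactor Rt i 0 = (if i = 0 then cofactor Rt 0 0 else 0)" by simp
    qed
    also have "\<dots> = cofactor Rt 0 0" using N1 by simp
    also have "mat_delete Rt 0 0 = HM q N (N - 1)"
      unfolding mat_delete_def HM_def Rt_def r_def by (rule eq_matI) (auto simp: algebra_simps)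
    then have "cofactor Rt 0 0 = HD q N (N - 1)" unfolding cofactor_def HD_def by simp
    finally show ?thesis .
  qed
  have dC: "det C = poly q c"
  proof -
    have "det C = (\<Sum>k<N. (-1)^k * w k * c^(N-1-k))" unfolding C_def by (rule det_CM[OF N1])
    also have "\<dots> = (\<Sum>k<N. (if k = 0 then c^N else 0)) + (\<Sum>k<N. coeff q (N - 1 - k) * c^(N-1-k))"
      unfolding sum.distrib[symmetric]
    proof (rule sum.cong[OF refl])
      fix k assume k: "k \<in> {..<N}"
      have "N - Suc k = N - 1 - k" by simp
      then have "(-1)^k * w k * c^(N-1-k) = (if k = 0 then c * c^(N-1-k) else 0) + coeff q (N - 1 - k) * c^(N-1-k)"
        unfolding w_def y_def by (auto simp: algebra_simps)
      moreover have "k = 0 \<Longrightarrow> c * c^(N-1-k) = c^N" using N1 by (simp add: power_Suc[symmetric])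
      ultimately show "(-1)^k * w k * c^(N-1-k) = (if k = 0 then c^N else 0) + coeff q (N - 1 - k) * c^(N-1-k)"
        by auto
    qed
    also have "(\<Sum>k<N. coeff q (N - 1 - k) * c^(N-1-k)) = (\<Sum>k<N. coeff q k * c^k)"
      using sum.nat_diff_reindex[of "\<lambda>k. coeff q k * c^k" N] by simp
    also have "(\<Sum>k<N. (if k = 0 then c^N else 0)) = c^N" using N1 by simp
    also have "c^N + (\<Sum>k<N. coeff q k * c^k) = poly q c"
      unfolding poly_altdef N using mon by (simp add: lessThan_Suc_atMost[symmetric])
    finally show ?thesis .
  qed
  have "HD p (Suc N) N = det C * det Rt" unfolding HD_def HMp by (rule det_mult[OF C Rt])
  then show ?thesis unfolding p_def dC dRt by simp
qed



interpretation rp: map_poly_inj_idom_hom "complex_of_real" ..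

abbreviation pc :: "real poly \<Rightarrow> complex poly" where "pc p \<equiv> map_poly complex_of_real p"

definition pstable :: "real poly \<Rightarrow> bool" where
  "pstable p \<longleftrightarrow> (\<forall>z. poly (pc p) z = 0 \<longrightarrow> Re z < 0)"

lemma HD_hom: "HD (pc p) d k = complex_of_real (HD p d k)"
proof -
  have "HM (pc p) d k = map_mat complex_of_real (HM p d k)"
    unfolding HM_def cf_def by (rule eq_matI) auto
  then show ?thesis unfolding HD_def by simp
qed

lemma HD_zero: "HD p d 0 = 1"
  unfolding HD_def HM_def by (simp add: det_def)

lemma poly_pc_cnj: "poly (pc p) (cnj z) = cnj (poly (pc p) z)"
  by (rule poly_cnj_real[symmetric]) (auto simp: Reals_def)

lemma pos_on_nonneg:
  assumes st: "pstable p" and mon: "lead_coeff p = 1" and d: "degree p \<ge> 1" and x: "x \<ge> 0"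
  shows "poly p x > 0"
proof (rule ccontr)
  assume "\<not> poly p x > 0"
  then have px: "poly p x \<le> 0" by simp
  obtain N0 where N0: "\<forall>y\<ge>N0. lead_coeff p \<le> poly p y"
    using poly_pinfty_gt_lc[of p] mon d by auto
  define b where "b = max x N0"
  have "poly p b \<ge> 1" using N0 mon unfolding b_def by auto
  moreover have "x \<le> b" unfolding b_def by simp
  ultimately have "\<exists>r\<ge>x. r \<le> b \<and> poly p r = 0"
    using IVT[of "poly p" x 0 b] px by auto
  then obtain r where r: "x \<le> r" "r \<le> b" "poly p r = 0" by blast
  then have "poly (pc p) (complex_of_real r) = 0" by simp
  then have "Re (complex_of_real r) < 0" using st unfolding pstable_def by blast
  then show False using r x by simp
qed

lemma cnj_poly_identity:
  fixes l :: complex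
  shows "pc [:(cmod l)^2, -2 * Re l, 1:] = [:-l,1:] * [:-cnj l, 1:]"
proof -
  have a: "l * cnj l = complex_of_real ((cmod l)^2)"
    by (simp add: complex_mult_cnj cmod_def)
  have b: "- l - cnj l = complex_of_real (-2 * Re l)"
    using complex_add_cnj[of l] by (simp add: algebra_simps minus_add_distrib[symmetric])
  show ?thesis using a b by (simp add: algebra_simps)
qed



lemma complex_root_exists:
  fixes p :: "complex poly"
  assumes "degree p \<ge> 1" shows "\<exists>z. poly p z = 0"
  using fundamental_theorem_of_algebra[of p] constant_degree[of p] assms by auto

lemma stable_factor:
  assumes st: "pstable p" and pq: "p = a * q"
  shows "pstable q"
  unfolding pstable_def
proof (intro allI impI)
  fix z assume "poly (pc q) z = 0"
  then have "poly (pc p) z = 0" unfolding pq by (simp add: rp.hom_mult)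
  then show "Re z < 0" using st unfolding pstable_def by blast
qed

lemma HD_pos:
  "degree p = n \<Longrightarrow> n \<ge> 1 \<Longrightarrow> lead_coeff p = 1 \<Longrightarrow> pstable p \<Longrightarrow> HD p n (n - 1) > 0"
proof (induction n arbitrary: p rule: less_induct)
  case (less n p)
  note deg = less.prems(1) and n1 = less.prems(2) and mon = less.prems(3) and st = less.prems(4)
  show ?case
  proof (cases "n = 1")
    case True then show ?thesis by (simp add: HD_zero)
  next
    case False
    then have n2: "n \<ge> 2" using n1 by simp
    have p0: "p \<noteq> 0" using mon by auto
    obtain l where l: "poly (pc p) l = 0"
      using complex_root_exists[of "pc p"] deg n1 by auto
    have Rel: "Re l < 0" using st l unfolding pstable_def by blast
    show ?thesis
    proof (cases "Im l = 0")
      case True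
      define r where "r = Re l"
      have lr: "l = complex_of_real r" unfolding r_def using True by (simp add: complex_eq_iff)
      have "complex_of_real (poly p r) = 0" using l unfolding lr by simp
      then have "poly p r = 0" by simp
      then obtain q where pq: "p = [:-r,1:] * q" using poly_eq_0_iff_dvd by (metis dvdE)
      have q0: "q \<noteq> 0" using p0 pq by auto
      have dq: "degree q = n - 1" using deg q0 unfolding pq by (subst (asm) degree_mult_eq) auto
      have mq: "lead_coeff q = 1" using mon unfolding pq lead_coeff_mult by simp
      have sq: "pstable q" by (rule stable_factor[OF st pq])
      have "HD p n (n - 1) = HD q (n - 1) (n - 1 - 1) * poly q (-r)"
      proof -
        have "HD ([:- r, 1:] * q) (Suc (n - 1)) (n - 1) = HD q (n - 1) (n - 1 - 1) * poly q (- r)"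
          by (rule KEY[OF dq]) (use n2 mq dq in auto)
        then show ?thesis using pq n2 by (simp add: Suc_diff_le)
      qed
      moreover have "HD q (n - 1) (n - 1 - 1) > 0"
        by (rule less.IH) (use n2 dq mq sq in auto)
      moreover have "poly q (-r) > 0"
        by (rule pos_on_nonneg[OF sq mq]) (use n2 dq Rel r_def in auto)
      ultimately show ?thesis by simp
    next
      case False
      define Q where "Q = [:(cmod l)^2, -2 * Re l, 1:]"
      have Q0: "Q \<noteq> 0" and dQ: "degree Q = 2" unfolding Q_def by auto
      have Ql: "poly (pc Q) l = 0" unfolding Q_def cnj_poly_identity by simp
      define rr where "rr = p mod Q"
      define q where "q = p div Q"
      have pqr: "p = q * Q + rr" unfolding q_def rr_def by simp
      have rr0: "rr = 0"
      proof -
        have "rr = 0 \<or> degree rr < 2" using degree_mod_less[OF Q0, of p] dQ unfolding rr_def by auto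
        then have "degree rr \<le> 1" by auto
        then have rr: "rr = [:coeff rr 0, coeff rr 1:]"
          by (intro poly_eqI) (auto simp: coeff_pCons split: nat.splits intro!: coeff_eq_0)
        have "poly (pc rr) l = 0" using l Ql unfolding pqr by (simp add: rp.hom_mult rp.hom_add)
        then have "complex_of_real (coeff rr 0) + complex_of_real (coeff rr 1) * l = 0"
        proof -
          have "pc [:coeff rr 0, coeff rr 1:] = [:complex_of_real (coeff rr 0), complex_of_real (coeff rr 1):]"
            by (rule poly_eqI) (simp add: coeff_pCons split: nat.split)
          moreover have "poly (pc [:coeff rr 0, coeff rr 1:]) l = 0"
            using \<open>poly (pc rr) l = 0\<close> rr by metis
          ultimately show ?thesis by (simp add: mult.commute)
        qed
        then have e1: "coeff rr 0 + coeff rr 1 * Re l = 0" and e2: "coeff rr 1 * Im l = 0"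
          by (auto simp: complex_eq_iff)
        from e2 False have "coeff rr 1 = 0" by simp
        with e1 have "coeff rr 0 = 0" by simp
        with \<open>coeff rr 1 = 0\<close> show ?thesis by (subst rr) simp
      qed
      have pq: "p = q * Q" using pqr rr0 by simp
      have q0: "q \<noteq> 0" using p0 pq by auto
      have dq: "degree q = n - 2" using deg pq q0 Q0 dQ by (simp add: degree_mult_eq)
      have "lead_coeff Q = 1" unfolding Q_def by simp
      then have mq: "lead_coeff q = 1" using mon unfolding pq lead_coeff_mult by simp
      have sq: "pstable q" by (rule stable_factor[OF st, of Q]) (use pq in \<open>simp add: mult.commute\<close>)
      define c1 where "c1 = - l"
      define c2 where "c2 = - cnj l"
      define q1 where "q1 = [:c2,1:] * pc q"
      have pcQ: "pc Q = [:-l,1:] * [:-cnj l,1:]" unfolding Q_def by (rule cnj_poly_identity)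
      have pcp: "pc p = [:c1,1:] * q1"
      proof -
        have "pc p = pc q * ([:-l,1:] * [:-cnj l,1:])" unfolding pq rp.hom_mult pcQ ..
        also have "\<dots> = [:-l,1:] * ([:-cnj l,1:] * pc q)" by (simp only: ac_simps)
        finally show ?thesis unfolding q1_def c1_def c2_def .
      qed
      have pcq0: "pc q \<noteq> 0" using q0 by simp
      have dq1: "degree q1 = n - 1" unfolding q1_def using pcq0 dq n2
        by (subst degree_mult_eq) auto
      have mq1: "coeff q1 (n - 1) = 1"
      proof -
        have "lead_coeff q1 = 1" unfolding q1_def lead_coeff_mult using mq by simp
        then show ?thesis using dq1 by simp
      qed
      have k1: "HD (pc p) n (n - 1) = HD q1 (n - 1) (n - 1 - 1) * poly q1 c1"
      proof -
        have "HD ([:c1,1:] * q1) (Suc (n - 1)) (n - 1) = HD q1 (n - 1) (n - 1 - 1) * poly q1 c1"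
          by (rule KEY[OF dq1]) (use n2 mq1 in auto)
        then show ?thesis unfolding pcp using n2 by (simp add: Suc_diff_le)
      qed
      define w where "w = poly (pc q) c1"
      have pq1: "poly q1 c1 = (c1 + c2) * w" unfolding q1_def w_def by (simp add: algebra_simps)
      have c12: "c1 + c2 = complex_of_real (- 2 * Re l)"
        unfolding c1_def c2_def by (simp add: complex_eq_iff)
      have w0: "w \<noteq> 0"
      proof
        assume "w = 0"
        then have "Re c1 < 0" using sq unfolding pstable_def w_def by blast
        then show False using Rel unfolding c1_def by simp
      qed
      have ww: "cnj w * w = complex_of_real ((Re w)^2 + (Im w)^2)"
        using complex_mult_cnj[of w] by (simp add: mult.commute)
      have wpos: "(Re w)^2 + (Im w)^2 > 0" using w0
        by (simp add: complex_eq_iff sum_power2_gt_zero_iff)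
      show ?thesis
      proof (cases "n = 2")
        case True
        then have "degree q = 0" using dq by simp
        then have "q = [:coeff q 0:]" using degree_0_id[of q] by simp
        moreover have "coeff q 0 = 1" using mq \<open>degree q = 0\<close> by simp
        ultimately have "q = 1" by (simp add: one_pCons)
        have dq1': "degree q1 = 1" using dq1 True by simp
        have "HD (pc p) n (n - 1) = c1 + c2"
          using k1 True pq1 \<open>q = 1\<close> unfolding w_def by (simp add: HD_zero)
        then have "complex_of_real (HD p n (n - 1)) = complex_of_real (- 2 * Re l)"
          unfolding HD_hom[symmetric] c12 .
        then have "HD p n (n - 1) = - 2 * Re l" by (simp only: of_real_eq_iff)
        then show ?thesis using Rel by simp
      next
        case False
        then have n3: "n \<ge> 3" using n2 by simp
        have dpq: "degree (pc q) = n - 2" using dq by simp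
        have k2: "HD q1 (n - 1) (n - 2) = HD (pc q) (n - 2) (n - 2 - 1) * poly (pc q) c2"
        proof -
          have "HD ([:c2,1:] * pc q) (Suc (n - 2)) (n - 2) = HD (pc q) (n - 2) (n - 2 - 1) * poly (pc q) c2"
            by (rule KEY[OF dpq]) (use n3 mq dq in auto)
          moreover have "Suc (n - 2) = n - 1" using n3 by simp
          ultimately show ?thesis unfolding q1_def by simp
        qed
        have pc2: "poly (pc q) c2 = cnj w" unfolding w_def c2_def c1_def
          by (simp add: poly_pc_cnj[symmetric])
        have IH: "HD q (n - 2) (n - 2 - 1) > 0"
          by (rule less.IH) (use n3 dq mq sq in auto)
        have "HD (pc p) n (n - 1) = HD (pc q) (n - 2) (n - 2 - 1) * (cnj w * w) * (c1 + c2)"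
          unfolding k1 pq1 pc2 using k2 n3 by (simp add: pc2 numeral_2_eq_2 algebra_simps)
        also have "\<dots> = complex_of_real (HD q (n - 2) (n - 2 - 1) * ((Re w)^2 + (Im w)^2) * (- 2 * Re l))"
          unfolding ww c12 HD_hom by simp
        finally have "HD p n (n - 1) = HD q (n - 2) (n - 2 - 1) * ((Re w)^2 + (Im w)^2) * (- 2 * Re l)"
          unfolding HD_hom by (simp only: of_real_eq_iff)
        then show ?thesis using IH wpos Rel by (simp add: mult_neg_pos)
      qed
    qed
  qed
qed

lemma no_imag_root:
  assumes deg: "degree p = n" and n2: "n \<ge> 2" and mon: "lead_coeff p = 1"
    and p0: "poly p 0 \<noteq> 0" and hd: "HD p n (n - 1) \<noteq> 0"
    and z: "poly (pc p) z = 0"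
  shows "Re z \<noteq> 0"
proof
  assume re: "Re z = 0"
  have z0: "z \<noteq> 0"
  proof
    assume "z = 0"
    then have "poly (pc p) (complex_of_real 0) = 0" using z by simp
    moreover have h: "\<And>x. poly (pc p) (complex_of_real x) = complex_of_real (poly p x)" by simp
    note h[of 0]
    ultimately have "complex_of_real (poly p 0) = 0" by simp
    then show False using p0 by simp
  qed
  have cz: "cnj z = - z" using re by (simp add: complex_eq_iff)
  have "poly (pc p) (- z) = 0" using z unfolding cz[symmetric] poly_pc_cnj by simp
  obtain Q1 where pQ: "pc p = [:-z,1:] * Q1" using z poly_eq_0_iff_dvd by (metis dvdE)
  have "(- z - z) * poly Q1 (- z) = 0" using \<open>poly (pc p) (- z) = 0\<close> unfolding pQ by simp
  then have Q1z: "poly Q1 (- z) = 0" using z0 by simp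
  have Q10: "Q1 \<noteq> 0"
  proof
    assume "Q1 = 0"
    then have "pc p = 0" by (simp add: pQ)
    then have "p = 0" by simp
    then show False using mon by simp
  qed
  have "degree (pc p) = 1 + degree Q1" unfolding pQ using Q10 by (subst degree_mult_eq) auto
  then have dQ: "degree Q1 = n - 1" using deg by simp
  have mQ: "coeff Q1 (n - 1) = 1"
  proof -
    have "lead_coeff (pc p) = 1" using mon by simp
    then have "lead_coeff Q1 = 1" unfolding pQ lead_coeff_mult by simp
    then show ?thesis using dQ by simp
  qed
  have "HD ([:-z,1:] * Q1) (Suc (n - 1)) (n - 1) = HD Q1 (n - 1) (n - 1 - 1) * poly Q1 (-z)"
    by (rule KEY[OF dQ]) (use n2 mQ in auto)
  then have "HD (pc p) n (n - 1) = 0" unfolding pQ[symmetric] Q1z using n2 by (simp add: Suc_diff_le)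
  then show False using hd unfolding HD_hom by simp
qed



definition mon :: "(nat \<Rightarrow> real) \<Rightarrow> (nat \<Rightarrow>\<^sub>0 nat) \<Rightarrow> real" where
  "mon x mn = (\<Prod>i\<in>Poly_Mapping.keys mn. x i ^ Poly_Mapping.lookup mn i)"

lemma eval_mon: "mpoly_eval p x = (\<Sum>mn\<in>Poly_Mapping.keys p. Poly_Mapping.lookup p mn * mon x mn)"
  unfolding mpoly_eval_def mon_def ..

lemma eval_superset:
  assumes "finite S" "Poly_Mapping.keys p \<subseteq> S"
  shows "mpoly_eval p x = (\<Sum>mn\<in>S. Poly_Mapping.lookup p mn * mon x mn)"
  unfolding eval_mon using assms
  by (intro sum.mono_neutral_left) (auto simp: in_keys_iff)

lemma mon_superset:
  assumes "finite S" "Poly_Mapping.keys mn \<subseteq> S"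
  shows "mon x mn = (\<Prod>i\<in>S. x i ^ Poly_Mapping.lookup mn i)"
  unfolding mon_def using assms
  by (intro prod.mono_neutral_left) (auto simp: in_keys_iff)

lemma mon_zero[simp]: "mon x 0 = 1" unfolding mon_def by simp

lemma mon_add: "mon x (a + b) = mon x a * mon x b"
proof -
  let ?S = "Poly_Mapping.keys a \<union> Poly_Mapping.keys b"
  have f: "finite ?S" by simp
  have "mon x (a + b) = (\<Prod>i\<in>?S. x i ^ Poly_Mapping.lookup (a + b) i)"
    by (rule mon_superset[OF f keys_add])
  also have "\<dots> = (\<Prod>i\<in>?S. x i ^ Poly_Mapping.lookup a i * x i ^ Poly_Mapping.lookup b i)"
    by (simp add: lookup_add power_add)
  also have "\<dots> = mon x a * mon x b"
    unfolding prod.distrib by (subst (1 2) mon_superset[OF f]) auto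
  finally show ?thesis .
qed

lemma eval_zero[simp]: "mpoly_eval 0 x = 0" unfolding mpoly_eval_def by simp

lemma eval_add: "mpoly_eval (p + q) x = mpoly_eval p x + mpoly_eval q x"
proof -
  let ?S = "Poly_Mapping.keys p \<union> Poly_Mapping.keys q"
  have f: "finite ?S" by simp
  show ?thesis
    by (subst (1 2 3) eval_superset[OF f]) (auto simp: keys_add lookup_add algebra_simps sum.distrib)
qed

lemma eval_sum: "mpoly_eval (\<Sum>i\<in>A. f i) x = (\<Sum>i\<in>A. mpoly_eval (f i) x)"
  by (induction A rule: infinite_finite_induct) (auto simp: eval_add)

lemma eval_single: "mpoly_eval (Poly_Mapping.single k c) x = c * mon x k"
  unfolding eval_mon by simp

lemma pm_sum_singles: "p = (\<Sum>k\<in>Poly_Mapping.keys p. Poly_Mapping.single k (Poly_Mapping.lookup p k))"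
proof (rule poly_mapping_eqI)
  fix k'
  show "Poly_Mapping.lookup p k' = Poly_Mapping.lookup (\<Sum>k\<in>Poly_Mapping.keys p. Poly_Mapping.single k (Poly_Mapping.lookup p k)) k'"
    unfolding lookup_sum lookup_single
    by (cases "k' \<in> Poly_Mapping.keys p") (auto simp: when_def in_keys_iff)
qed

lemma eval_mult: "mpoly_eval (p * q) x = mpoly_eval p x * mpoly_eval q x"
proof -
  have "p * q = (\<Sum>a\<in>Poly_Mapping.keys p. Poly_Mapping.single a (Poly_Mapping.lookup p a)) *
                (\<Sum>b\<in>Poly_Mapping.keys q. Poly_Mapping.single b (Poly_Mapping.lookup q b))"
    by (subst (1) pm_sum_singles[of p], subst (1) pm_sum_singles[of q]) simp
  also have "\<dots> = (\<Sum>a\<in>Poly_Mapping.keys p. \<Sum>b\<in>Poly_Mapping.keys q.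
       Poly_Mapping.single (a + b) (Poly_Mapping.lookup p a * Poly_Mapping.lookup q b))"
    by (simp add: sum_product mult_single)
  finally have "mpoly_eval (p * q) x = (\<Sum>a\<in>Poly_Mapping.keys p. \<Sum>b\<in>Poly_Mapping.keys q.
       Poly_Mapping.lookup p a * Poly_Mapping.lookup q b * (mon x a * mon x b))"
    by (simp add: eval_sum eval_single mon_add)
  also have "\<dots> = mpoly_eval p x * mpoly_eval q x"
    unfolding eval_mon sum_product by (simp add: algebra_simps)
  finally show ?thesis .
qed

lemma eval_one[simp]: "mpoly_eval 1 x = 1"
  unfolding eval_mon by simp

lemma eval_prod: "mpoly_eval (\<Prod>i\<in>A. f i) x = (\<Prod>i\<in>A. mpoly_eval (f i) x)"
  by (induction A rule: infinite_finite_induct) (auto simp: eval_mult)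

lemma eval_power: "mpoly_eval (p ^ k) x = mpoly_eval p x ^ k"
  by (induction k) (auto simp: eval_mult)

lemma eval_const[simp]: "mpoly_eval (mpoly_const c) x = c"
  unfolding mpoly_const_def eval_single by simp

lemma eval_var[simp]: "mpoly_eval (mpoly_var i) x = x i"
  unfolding mpoly_var_def eval_single mon_def by simp

lemma eval_subst: "mpoly_eval (mpoly_subst s p) x = mpoly_eval p (\<lambda>i. mpoly_eval (s i) x)"
  unfolding mpoly_subst_def eval_sum eval_mult eval_prod eval_power eval_single
  by (simp add: mpoly_eval_def[of p] mon_def)

lemma eval_affine:
  "mpoly_eval (affine_change ql qu f) x = mpoly_eval f (\<lambda>k. ql k + (qu k - ql k) * x k)"
  unfolding affine_change_def eval_subst by (simp add: eval_add eval_mult)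

lemma mon_single0: "mon x (Poly_Mapping.single i d) = x i ^ d"
  unfolding mon_def by simp

lemma eval_homogenize:
  assumes "x 0 = 1"
  shows "mpoly_eval (homogenize g) x = mpoly_eval g x"
  unfolding homogenize_def eval_sum eval_single mon_add
  using assms by (simp add: eval_mon[of g] mon_single0)

lemma eval_vars:
  assumes "mpoly_vars p \<subseteq> S" "\<And>i. i \<in> S \<Longrightarrow> x i = x' i"
  shows "mpoly_eval p x = mpoly_eval p x'"
  unfolding mpoly_eval_def
proof (intro sum.cong refl arg_cong2[where f="(*)"] prod.cong)
  fix mn i assume "mn \<in> Poly_Mapping.keys p" "i \<in> Poly_Mapping.keys mn"
  then have "i \<in> S" using assms(1) unfolding mpoly_vars_def by auto
  then show "x i ^ Poly_Mapping.lookup mn i = x' i ^ Poly_Mapping.lookup mn i" using assms(2) by simp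
qed



lemma Vt_entry:
  assumes t: "t \<in> carrier_vec (m+1)" and r: "r \<le> m"
  shows "vec_point m (vertex_matrix m \<theta> *\<^sub>v t) r =
    (\<Sum>k<m+1. (if r = 0 \<or> r \<in> \<theta> ` {1..k} then 1 else 0) * t $ k)"
  using t r unfolding vec_point_def vertex_matrix_def
  by (auto simp: scalar_prod_def lessThan_atLeast0 intro!: sum.cong)

lemma cover1:
  assumes t: "t \<in> std_simplex m"
  shows "vec_point m (vertex_matrix m \<theta> *\<^sub>v t) 0 = 1"
    "\<And>r. r \<in> {1..m} \<Longrightarrow> 0 \<le> vec_point m (vertex_matrix m \<theta> *\<^sub>v t) r \<and>
                              vec_point m (vertex_matrix m \<theta> *\<^sub>v t) r \<le> 1"
proof -
  have tc: "t \<in> carrier_vec (m+1)" and nn: "\<And>i. i < m+1 \<Longrightarrow> 0 \<le> t $ i"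
    and s1: "(\<Sum>i<m+1. t $ i) = 1" using t unfolding std_simplex_def by auto
  show "vec_point m (vertex_matrix m \<theta> *\<^sub>v t) 0 = 1"
    unfolding Vt_entry[OF tc le0] using s1 by simp
  fix r assume r: "r \<in> {1..m}"
  have e: "vec_point m (vertex_matrix m \<theta> *\<^sub>v t) r = (\<Sum>k<m+1. (if r = 0 \<or> r \<in> \<theta> ` {1..k} then 1 else 0) * t $ k)"
    using r by (intro Vt_entry[OF tc]) auto
  have "(\<Sum>k<m+1. (if r = 0 \<or> r \<in> \<theta> ` {1..k} then 1 else 0) * t $ k) \<le> (\<Sum>k<m+1. t $ k)"
    by (rule sum_mono) (use nn in auto)
  moreover have "0 \<le> (\<Sum>k<m+1. (if r = 0 \<or> r \<in> \<theta> ` {1..k} then 1 else 0) * t $ k)"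
    by (rule sum_nonneg) (use nn in auto)
  ultimately show "0 \<le> vec_point m (vertex_matrix m \<theta> *\<^sub>v t) r \<and>
                   vec_point m (vertex_matrix m \<theta> *\<^sub>v t) r \<le> 1" using e s1 by simp
qed

lemma cover2:
  assumes x: "\<forall>k\<in>{1..m}. 0 \<le> x k \<and> x k \<le> 1"
  shows "\<exists>\<theta> t. \<theta> permutes {1..m} \<and> t \<in> std_simplex m \<and>
     (\<forall>k\<in>{1..m}. vec_point m (vertex_matrix m \<theta> *\<^sub>v t) k = x k)"
proof -
  define xs where "xs = sort_key (\<lambda>i. - x i) [1..<Suc m]"
  have dxs: "distinct xs" unfolding xs_def by simp
  have sxs: "set xs = {1..m}" unfolding xs_def by auto
  have lxs: "length xs = m" unfolding xs_def by simp
  have sorted: "sorted (map (\<lambda>i. - x i) xs)" unfolding xs_def by simp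
  define \<theta> where "\<theta> k = (if k \<in> {1..m} then xs ! (k - 1) else k)" for k
  have bij: "bij_betw \<theta> {1..m} {1..m}"
  proof -
    have b: "bij_betw ((!) xs) {..<m} {1..m}" using bij_betw_nth[OF dxs] lxs sxs by auto
    have b2: "bij_betw (\<lambda>k. k - 1) {1..m} {..<m}"
      by (rule bij_betw_byWitness[of _ Suc]) auto
    have "bij_betw ((!) xs \<circ> (\<lambda>k. k - 1)) {1..m} {1..m}" by (rule bij_betw_trans[OF b2 b])
    then show ?thesis by (rule bij_betw_cong[THEN iffD1, rotated]) (auto simp: \<theta>_def)
  qed
  have perm: "\<theta> permutes {1..m}" by (rule bij_imp_permutes[OF bij]) (auto simp: \<theta>_def)
  have th_in: "\<theta> k \<in> {1..m}" if "k \<in> {1..m}" for k using bij that by (meson bij_betwE)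
  have mono: "x (\<theta> l) \<le> x (\<theta> k)" if "1 \<le> k" "k \<le> l" "l \<le> m" for k l
  proof -
    have "(map (\<lambda>i. - x i) xs) ! (k - 1) \<le> (map (\<lambda>i. - x i) xs) ! (l - 1)"
      by (rule sorted_nth_mono[OF sorted]) (use that lxs in auto)
    then show ?thesis using that lxs unfolding \<theta>_def by auto
  qed
  define X where "X k = (if k = 0 then 1 else if k \<le> m then x (\<theta> k) else 0)" for k
  define t where "t = vec (m+1) (\<lambda>k. X k - X (Suc k))"
  have Xdec: "X (Suc k) \<le> X k" if "k \<le> m" for k
  proof (cases "k = 0")
    case True then show ?thesis unfolding X_def using x th_in by auto
  next
    case False
    then show ?thesis unfolding X_def using x th_in mono[of k "Suc k"] that by auto
  qed
  have tS: "t \<in> std_simplex m"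
  proof -
    have "(\<Sum>i<m+1. t $ i) = (\<Sum>i<m+1. X i - X (Suc i))" unfolding t_def by simp
    also have "\<dots> = X 0 - X (m+1)" by (rule sum_lessThan_telescope')
    also have "\<dots> = 1" unfolding X_def by simp
    finally show ?thesis unfolding std_simplex_def t_def using Xdec by auto
  qed
  have comp: "vec_point m (vertex_matrix m \<theta> *\<^sub>v t) r = x r" if r: "r \<in> {1..m}" for r
  proof -
    obtain j where j: "j \<in> {1..m}" "r = \<theta> j" using bij r by (metis bij_betw_imp_surj_on imageE)
    have tc: "t \<in> carrier_vec (m+1)" unfolding t_def by simp
    have iff: "(r = 0 \<or> r \<in> \<theta> ` {1..k}) \<longleftrightarrow> j \<le> k" if "k < m+1" for k
    proof
      assume "r = 0 \<or> r \<in> \<theta> ` {1..k}"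
      then obtain i where i: "i \<in> {1..k}" "r = \<theta> i" using r by auto
      then have "\<theta> i = \<theta> j" "i \<in> {1..m}" using j that by auto
      then have "i = j" using bij j(1) unfolding bij_betw_def inj_on_def by blast
      then show "j \<le> k" using i by auto
    next
      assume "j \<le> k" then show "r = 0 \<or> r \<in> \<theta> ` {1..k}" using j by auto
    qed
    have "vec_point m (vertex_matrix m \<theta> *\<^sub>v t) r = (\<Sum>k<m+1. (if r = 0 \<or> r \<in> \<theta> ` {1..k} then 1 else 0) * t $ k)"
      by (rule Vt_entry[OF tc]) (use r in auto)
    also have "\<dots> = (\<Sum>k<m+1. (if j \<le> k then X k - X (Suc k) else 0))"
      using iff by (intro sum.cong refl) (auto simp: t_def)
    also have "\<dots> = (\<Sum>k\<in>{j..<m+1}. X k - X (Suc k))"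
      by (rule sum.mono_neutral_cong_right) auto
    also have "\<dots> = - (\<Sum>k\<in>{j..<m+1}. X (Suc k) - X k)" by (simp add: sum_negf[symmetric])
    also have "\<dots> = X j" using sum_Suc_diff'[of j "m+1" X] j unfolding X_def by auto
    also have "\<dots> = x r" unfolding X_def using j by auto
    finally show ?thesis .
  qed
  show ?thesis using perm tS comp by blast
qed



definition Gdet :: "nat \<Rightarrow> (nat \<Rightarrow> nat \<Rightarrow> real) \<Rightarrow> complex \<Rightarrow> complex" where
  "Gdet n e z = det (mat n n (\<lambda>(i,j). (if i = j then z else 0) - complex_of_real (e i j)))"

lemma poly_char_poly_det:
  assumes A: "(A :: 'a::comm_ring_1 mat) \<in> carrier_mat n n"
  shows "poly (char_poly A) z = det (mat n n (\<lambda>(i,j). (if i = j then z else 0) - A $$ (i,j)))"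
  unfolding char_poly_def
  by (rule poly_det_cong[of _ n]) (use A in \<open>auto simp: char_poly_matrix_def\<close>)

lemma char_G:
  assumes B: "B \<in> carrier_mat n n"
  shows "eigenvalue (map_mat complex_of_real B) z \<longleftrightarrow> Gdet n (\<lambda>i j. B $$ (i,j)) z = 0"
proof -
  have B': "map_mat complex_of_real B \<in> carrier_mat n n" using B by simp
  have "eigenvalue (map_mat complex_of_real B) z \<longleftrightarrow> poly (char_poly (map_mat complex_of_real B)) z = 0"
    by (rule eigenvalue_root_char_poly[OF B'])
  also have "poly (char_poly (map_mat complex_of_real B)) z = Gdet n (\<lambda>i j. B $$ (i,j)) z"
    unfolding poly_char_poly_det[OF B'] Gdet_def
    by (rule arg_cong[of _ _ det], rule eq_matI) (use B in auto)
  finally show ?thesis .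
qed

lemma char_pc:
  assumes B: "B \<in> carrier_mat n n"
  shows "eigenvalue (map_mat complex_of_real B) z \<longleftrightarrow> poly (pc (char_poly B)) z = 0"
proof -
  have B': "map_mat complex_of_real B \<in> carrier_mat n n" using B by simp
  show ?thesis unfolding eigenvalue_root_char_poly[OF B'] of_real_hom.char_poly_hom[OF B] ..
qed

lemma hurwitz_pstable:
  assumes B: "B \<in> carrier_mat n n"
  shows "hurwitz_stable B \<longleftrightarrow> pstable (char_poly B)"
  unfolding hurwitz_stable_def pstable_def char_pc[OF B] ..

lemma tendsto_G:
  assumes e: "\<And>i j. i < n \<Longrightarrow> j < n \<Longrightarrow> (\<lambda>k. e k i j) \<longlonglongrightarrow> e0 i j"
    and z: "zk \<longlonglongrightarrow> z"
  shows "(\<lambda>k. Gdet n (e k) (zk k)) \<longlonglongrightarrow> Gdet n e0 z"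
proof -
  have c: "\<And>e z. mat n n (\<lambda>(i,j). (if i = j then z else 0) - complex_of_real (e i j)) \<in> carrier_mat n n"
    by simp
  show ?thesis
    unfolding Gdet_def det_def'[OF c]
  proof (intro tendsto_sum tendsto_mult tendsto_const tendsto_prod)
    fix p i assume p: "p \<in> {p. p permutes {0..<n}}" and i: "i \<in> {0..<n}"
    then have pi: "p i < n" using permutes_in_image by fastforce
    show "(\<lambda>k. mat n n (\<lambda>(i,j). (if i = j then zk k else 0) - complex_of_real (e k i j)) $$ (i, p i))
        \<longlonglongrightarrow> mat n n (\<lambda>(i,j). (if i = j then z else 0) - complex_of_real (e0 i j)) $$ (i, p i)"
      using i pi by (auto intro!: tendsto_intros e z)
  qed
qed

lemma eig_bound:
  assumes A: "(A :: complex mat) \<in> carrier_mat n n" and ev: "eigenvalue A z"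
  shows "cmod z \<le> (\<Sum>i<n. \<Sum>j<n. cmod (A $$ (i,j)))"
proof -
  obtain v where v: "v \<in> carrier_vec n" "v \<noteq> 0\<^sub>v n" "A *\<^sub>v v = z \<cdot>\<^sub>v v"
    using ev A unfolding eigenvalue_def eigenvector_def by auto
  have n0: "n > 0" using v by (metis carrier_vecD eq_vecI gr0I index_zero_vec(2) less_nat_zero_code)
  define M where "M = Max ((\<lambda>i. cmod (v $ i)) ` {..<n})"
  have "M \<in> (\<lambda>i. cmod (v $ i)) ` {..<n}" unfolding M_def by (rule Max_in) (use n0 in auto)
  then obtain i0 where i0: "i0 < n" "cmod (v $ i0) = M" by auto
  have le: "cmod (v $ j) \<le> M" if "j < n" for j unfolding M_def using that by auto
  have M0: "M > 0"
  proof (rule ccontr)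
    assume "\<not> M > 0"
    then have "\<forall>j<n. v $ j = 0" using le by (meson norm_le_zero_iff not_le order_trans)
    then have "v = 0\<^sub>v n" using v(1) by (intro eq_vecI) auto
    then show False using v(2) by simp
  qed
  have "z * v $ i0 = (\<Sum>j<n. A $$ (i0,j) * v $ j)"
  proof -
    have "(A *\<^sub>v v) $ i0 = (z \<cdot>\<^sub>v v) $ i0" using v(3) by simp
    then show ?thesis using A v(1) i0 by (simp add: scalar_prod_def lessThan_atLeast0 mult.commute)
  qed
  then have "cmod z * M = cmod (\<Sum>j<n. A $$ (i0,j) * v $ j)" using i0 by (metis norm_mult)
  also have "\<dots> \<le> (\<Sum>j<n. cmod (A $$ (i0,j)) * cmod (v $ j))"
    by (rule order_trans[OF norm_sum]) (simp add: norm_mult)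
  also have "\<dots> \<le> (\<Sum>j<n. cmod (A $$ (i0,j)) * M)"
    by (rule sum_mono) (simp add: le mult_left_mono)
  also have "\<dots> = (\<Sum>j<n. cmod (A $$ (i0,j))) * M" by (simp add: sum_distrib_right)
  also have "(\<Sum>j<n. cmod (A $$ (i0,j))) \<le> (\<Sum>i<n. \<Sum>j<n. cmod (A $$ (i,j)))"
    by (rule member_le_sum[of i0 "{..<n}" "\<lambda>i. \<Sum>j<n. cmod (A $$ (i,j))"]) (auto intro: sum_nonneg i0)
  then have "(\<Sum>j<n. cmod (A $$ (i0,j))) * M \<le> (\<Sum>i<n. \<Sum>j<n. cmod (A $$ (i,j))) * M"
    using M0 by simp
  finally show ?thesis using M0 by simp
qed

lemma real_bw:
  fixes X :: "nat \<Rightarrow> real"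
  assumes "Bseq X"
  shows "\<exists>r L. strict_mono r \<and> (X \<circ> r) \<longlonglongrightarrow> L"
proof -
  obtain r where r: "strict_mono r" "monoseq (\<lambda>n. X (r n))" using seq_monosub by blast
  have "Bseq (\<lambda>n. X (r n))" using assms by (metis Bseq_def)
  then have "convergent (\<lambda>n. X (r n))" using r(2) Bseq_monoseq_convergent by blast
  then show ?thesis using r(1) by (auto simp: convergent_def comp_def)
qed

lemma complex_bw:
  fixes Z :: "nat \<Rightarrow> complex"
  assumes B: "\<And>k. cmod (Z k) \<le> K"
  shows "\<exists>r L. strict_mono r \<and> (Z \<circ> r) \<longlonglongrightarrow> L"
proof -
  have "Bseq (\<lambda>k. Re (Z k))" using B abs_Re_le_cmod
    by (intro BseqI'[of _ K]) (auto intro: order_trans)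
  then obtain r1 L1 where r1: "strict_mono r1" "((\<lambda>k. Re (Z k)) \<circ> r1) \<longlonglongrightarrow> L1"
    using real_bw by blast
  have "Bseq (\<lambda>k. Im (Z (r1 k)))" using B abs_Im_le_cmod
    by (intro BseqI'[of _ K]) (auto intro: order_trans)
  then obtain r2 L2 where r2: "strict_mono r2" "((\<lambda>k. Im (Z (r1 k))) \<circ> r2) \<longlonglongrightarrow> L2"
    using real_bw by blast
  have sm: "strict_mono (r1 \<circ> r2)" using r1(1) r2(1) by (rule strict_mono_o)
  have "((\<lambda>k. Re (Z k)) \<circ> r1 \<circ> r2) \<longlonglongrightarrow> L1" using LIMSEQ_subseq_LIMSEQ[OF r1(2) r2(1)] .
  moreover have "((\<lambda>k. Im (Z (r1 k))) \<circ> r2) \<longlonglongrightarrow> L2" using r2(2) .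
  ultimately have "(Z \<circ> (r1 \<circ> r2)) \<longlonglongrightarrow> Complex L1 L2"
    unfolding tendsto_complex_iff by (simp add: comp_def)
  then show ?thesis using sm by blast
qed



lemma interval_clopen:
  fixes P :: "real \<Rightarrow> bool"
  assumes P0: "P 0"
    and SO: "\<And>s u. s \<in> {0..1} \<Longrightarrow> P s \<Longrightarrow> (\<And>k. u k \<in> {0..1}) \<Longrightarrow> (\<And>k. \<not> P (u k)) \<Longrightarrow> u \<longlonglongrightarrow> s \<Longrightarrow> False"
    and UO: "\<And>s u. s \<in> {0..1} \<Longrightarrow> \<not> P s \<Longrightarrow> (\<And>k. u k \<in> {0..1}) \<Longrightarrow> (\<And>k. P (u k)) \<Longrightarrow> u \<longlonglongrightarrow> s \<Longrightarrow> False"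
  shows "\<forall>s\<in>{0..1}. P s"
proof (rule ccontr)
  assume "\<not> (\<forall>s\<in>{0..1}. P s)"
  define U where "U = {s\<in>{0..1}. \<not> P s}"
  have Une: "U \<noteq> {}" using \<open>\<not> (\<forall>s\<in>{0..1}. P s)\<close> unfolding U_def by auto
  have bdd: "bdd_below U" unfolding U_def by (rule bdd_belowI[of _ 0]) auto
  define \<sigma> where "\<sigma> = Inf U"
  have lo: "\<sigma> \<le> s" if "s \<in> U" for s unfolding \<sigma>_def using that bdd by (rule cInf_lower)
  have s0: "0 \<le> \<sigma>" unfolding \<sigma>_def using Une by (rule cInf_greatest) (auto simp: U_def)
  have s1: "\<sigma> \<le> 1" using Une lo unfolding U_def by force
  have below: "P s" if "0 \<le> s" "s < \<sigma>" for s
    using lo[of s] that s1 unfolding U_def by force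
  show False
  proof (cases "P \<sigma>")
    case True
    have "\<exists>x\<in>U. x < \<sigma> + inverse (real (Suc k))" for k
      unfolding \<sigma>_def using Une bdd by (subst cInf_less_iff[symmetric]) auto
    then obtain u where u: "\<And>k. u k \<in> U" "\<And>k. u k < \<sigma> + inverse (real (Suc k))" by metis
    have "u \<longlonglongrightarrow> \<sigma>"
    proof (rule tendsto_sandwich[of "\<lambda>_. \<sigma>" _ _ "\<lambda>k. \<sigma> + inverse (real (Suc k))"])
      show "\<forall>\<^sub>F k in sequentially. \<sigma> \<le> u k" using lo u(1) by auto
      show "\<forall>\<^sub>F k in sequentially. u k \<le> \<sigma> + inverse (real (Suc k))" using u(2) by (auto intro!: always_eventually less_imp_le)
      show "(\<lambda>k. \<sigma> + inverse (real (Suc k))) \<longlonglongrightarrow> \<sigma>"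
        using tendsto_add[OF tendsto_const LIMSEQ_inverse_real_of_nat, of \<sigma>] by simp
    qed simp
    then show False using SO[of \<sigma> u] True s0 s1 u(1) unfolding U_def by auto
  next
    case False
    then have sp: "\<sigma> > 0" using P0 s0 by (cases "\<sigma> = 0") auto
    define u where "u k = \<sigma> - \<sigma> * inverse (real (Suc k))" for k
    have uin: "0 \<le> u k \<and> u k < \<sigma>" for k
    proof -
      have "inverse (real (Suc k)) \<le> 1" by (simp add: inverse_le_1_iff)
      moreover have "inverse (real (Suc k)) > 0" by auto
      ultimately have "\<sigma> * inverse (real (Suc k)) \<le> \<sigma>" "\<sigma> * inverse (real (Suc k)) > 0"
        using sp mult_left_le[of "inverse (real (Suc k))" \<sigma>] by auto
      then show ?thesis unfolding u_def by linarith
    qed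
    have "u \<longlonglongrightarrow> \<sigma> - \<sigma> * 0" unfolding u_def
      by (intro tendsto_intros LIMSEQ_inverse_real_of_nat)
    then have "u \<longlonglongrightarrow> \<sigma>" by simp
    then show False using UO[of \<sigma> u] False s0 s1 uin below by fastforce
  qed
qed

lemma poly_G:
  assumes B: "B \<in> carrier_mat n n"
  shows "poly (char_poly (map_mat complex_of_real B)) z = Gdet n (\<lambda>i j. B $$ (i,j)) z"
proof -
  have B': "map_mat complex_of_real B \<in> carrier_mat n n" using B by simp
  show ?thesis unfolding poly_char_poly_det[OF B'] Gdet_def
    by (rule arg_cong[of _ _ det], rule eq_matI) (use B in auto)
qed

lemma prod_lin_bound:
  assumes "\<forall>a\<in>set as. Re a < 0" and z: "Re z > 0"
  shows "cmod (poly (\<Prod>a\<leftarrow>as. [:-a,1:]) z) \<ge> (Re z)^(length as)"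
  using assms(1)
proof (induction as)
  case Nil then show ?case by simp
next
  case (Cons a as)
  have "Re z \<le> Re (z - a)" using Cons.prems by simp
  also have "\<dots> \<le> cmod (z - a)" by (rule complex_Re_le_cmod)
  finally have h1: "Re z \<le> cmod (z - a)" .
  have h2: "(Re z)^(length as) \<le> cmod (poly (\<Prod>a\<leftarrow>as. [:-a,1:]) z)" using Cons by simp
  have "Re z * (Re z)^(length as) \<le> cmod (z - a) * cmod (poly (\<Prod>a\<leftarrow>as. [:-a,1:]) z)"
    by (rule mult_mono[OF h1 h2]) (use z in auto)
  moreover have "poly (\<Prod>a\<leftarrow>(a # as). [:-a,1:]) z = (z - a) * poly (\<Prod>a\<leftarrow>as. [:-a,1:]) z" by (simp add: algebra_simps)
  ultimately show ?case by (simp only: norm_mult) simp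
qed

lemma root_prod_list: "(a::complex) \<in> set as \<Longrightarrow> poly (\<Prod>x\<leftarrow>as. [:-x,1:]) a = 0"
proof (induction as)
  case (Cons b as)
  have "poly (\<Prod>x\<leftarrow>(b # as). [:-x,1:]) a = (a - b) * poly (\<Prod>x\<leftarrow>as. [:-x,1:]) a"
    by (simp add: algebra_simps)
  then show ?case using Cons by auto
qed simp

lemma segment_stable:
  fixes E :: "real \<Rightarrow> real mat"
  assumes carr: "\<And>s. s \<in> {0..1} \<Longrightarrow> E s \<in> carrier_mat n n"
    and cont: "\<And>i j. i < n \<Longrightarrow> j < n \<Longrightarrow> continuous_on {0..1} (\<lambda>s. E s $$ (i,j))"
    and noimag: "\<And>s z. s \<in> {0..1} \<Longrightarrow> eigenvalue (map_mat complex_of_real (E s)) z \<Longrightarrow> Re z \<noteq> 0"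
    and st0: "hurwitz_stable (E 0)"
  shows "\<forall>s\<in>{0..1}. hurwitz_stable (E s)"
proof (rule interval_clopen[of "\<lambda>s. hurwitz_stable (E s)"])
  show "hurwitz_stable (E 0)" by (rule st0)
  have seqc: "(\<lambda>k. E (u k) $$ (i,j)) \<longlonglongrightarrow> E s $$ (i,j)"
    if "i < n" "j < n" "s \<in> {0..1}" "\<And>k. u k \<in> {0..1}" "u \<longlonglongrightarrow> s" for i j s u
    by (rule continuous_on_tendsto_compose[OF cont[OF that(1,2)] that(5,3)]) (use that(4) in auto)
  {
    fix s u assume s: "s \<in> {0..1}" and st: "hurwitz_stable (E s)" and u: "\<And>k. u k \<in> {0..(1::real)}"
      and nst: "\<And>k. \<not> hurwitz_stable (E (u k))" and lim: "u \<longlonglongrightarrow> s"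
    have "\<exists>z. eigenvalue (map_mat complex_of_real (E (u k))) z \<and> Re z \<ge> 0" for k
      using nst[of k] unfolding hurwitz_stable_def by auto
    then obtain zk where zk: "\<And>k. eigenvalue (map_mat complex_of_real (E (u k))) (zk k)"
      "\<And>k. Re (zk k) \<ge> 0" by metis
    define b where "b k = (\<Sum>i<n. \<Sum>j<n. cmod (complex_of_real (E (u k) $$ (i,j))))" for k
    have bz: "cmod (zk k) \<le> b k" for k
    proof -
      have C: "E (u k) \<in> carrier_mat n n" using carr u by auto
      have "cmod (zk k) \<le> (\<Sum>i<n. \<Sum>j<n. cmod (map_mat complex_of_real (E (u k)) $$ (i,j)))"
        by (rule eig_bound[OF _ zk(1)]) (use C in auto)
      also have "\<dots> = b k" unfolding b_def using C by (intro sum.cong refl) auto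
      finally show ?thesis .
    qed
    have "b \<longlonglongrightarrow> (\<Sum>i<n. \<Sum>j<n. cmod (complex_of_real (E s $$ (i,j))))"
      unfolding b_def by (intro tendsto_sum tendsto_norm tendsto_of_real seqc[OF _ _ s u lim]) auto
    then have "Bseq b" using convergent_imp_Bseq convergentI by blast
    then obtain K where K: "\<And>k. norm (b k) \<le> K" using BseqE by metis
    have "\<And>k. cmod (zk k) \<le> K"
    proof -
      fix k have "b k \<le> norm (b k)" by simp
      then show "cmod (zk k) \<le> K" using bz[of k] K[of k] by linarith
    qed
    then obtain r L where r: "strict_mono r" "(zk \<circ> r) \<longlonglongrightarrow> L" using complex_bw by blast
    have ur: "(u \<circ> r) \<longlonglongrightarrow> s" using LIMSEQ_subseq_LIMSEQ[OF lim r(1)] .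
    have "(\<lambda>k. Gdet n (\<lambda>i j. E ((u \<circ> r) k) $$ (i,j)) ((zk \<circ> r) k)) \<longlonglongrightarrow> Gdet n (\<lambda>i j. E s $$ (i,j)) L"
      by (rule tendsto_G[OF _ r(2)]) (rule seqc, use s u ur in \<open>auto simp: comp_def\<close>)
    moreover have "Gdet n (\<lambda>i j. E ((u \<circ> r) k) $$ (i,j)) ((zk \<circ> r) k) = 0" for k
      using char_G[OF carr[OF u[of "r k"]]] zk(1)[of "r k"] by simp
    ultimately have "(\<lambda>k. 0) \<longlonglongrightarrow> Gdet n (\<lambda>i j. E s $$ (i,j)) L" by simp
    then have "Gdet n (\<lambda>i j. E s $$ (i,j)) L = 0" by (simp add: LIMSEQ_const_iff)
    then have evL: "eigenvalue (map_mat complex_of_real (E s)) L" using char_G[OF carr[OF s]] by simp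
    have "(\<lambda>k. Re ((zk \<circ> r) k)) \<longlonglongrightarrow> Re L" by (intro tendsto_intros r(2))
    then have "0 \<le> Re L" by (rule LIMSEQ_le_const) (use zk(2) in auto)
    moreover have "Re L < 0" using st evL unfolding hurwitz_stable_def by blast
    ultimately show False by simp
  }
  {
    fix s u assume s: "s \<in> {0..1}" and nst: "\<not> hurwitz_stable (E s)" and u: "\<And>k. u k \<in> {0..(1::real)}"
      and st: "\<And>k. hurwitz_stable (E (u k))" and lim: "u \<longlonglongrightarrow> s"
    obtain z where z: "eigenvalue (map_mat complex_of_real (E s)) z" "\<not> Re z < 0"
      using nst unfolding hurwitz_stable_def by blast
    have zp: "Re z > 0" using noimag[OF s z(1)] z(2) by simp
    have bound: "(Re z)^n \<le> cmod (Gdet n (\<lambda>i j. E (u k) $$ (i,j)) z)" for k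
    proof -
      let ?B = "map_mat complex_of_real (E (u k))"
      have B: "?B \<in> carrier_mat n n" using carr u by simp
      obtain as where as: "char_poly ?B = (\<Prod>a\<leftarrow>as. [:-a,1:])" "length as = n"
        using char_poly_factorized[OF B] by blast
      have "\<forall>a\<in>set as. Re a < 0"
      proof
        fix a assume "a \<in> set as"
        then have "poly (char_poly ?B) a = 0" unfolding as(1) by (rule root_prod_list)
        then have "eigenvalue ?B a" using eigenvalue_root_char_poly[OF B] by simp
        then show "Re a < 0" using st[of k] unfolding hurwitz_stable_def by blast
      qed
      then have "(Re z)^n \<le> cmod (poly (char_poly ?B) z)"
        using prod_lin_bound[OF _ zp, of as] as by simp
      also have "poly (char_poly ?B) z = Gdet n (\<lambda>i j. E (u k) $$ (i,j)) z"
        by (rule poly_G) (use carr u in auto)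
      finally show ?thesis .
    qed
    have "(\<lambda>k. Gdet n (\<lambda>i j. E (u k) $$ (i,j)) z) \<longlonglongrightarrow> Gdet n (\<lambda>i j. E s $$ (i,j)) z"
      by (rule tendsto_G[OF _ tendsto_const]) (rule seqc, use s u lim in auto)
    moreover have "Gdet n (\<lambda>i j. E s $$ (i,j)) z = 0" using char_G[OF carr[OF s]] z(1) by simp
    ultimately have "(\<lambda>k. Gdet n (\<lambda>i j. E (u k) $$ (i,j)) z) \<longlonglongrightarrow> 0" by simp
    then have "(\<lambda>k. cmod (Gdet n (\<lambda>i j. E (u k) $$ (i,j)) z)) \<longlonglongrightarrow> 0" by (rule tendsto_norm_zero)
    moreover have "(Re z)^n > 0" using zp by simp
    ultimately have "\<forall>\<^sub>F k in sequentially. cmod (Gdet n (\<lambda>i j. E (u k) $$ (i,j)) z) < (Re z)^n"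
      using order_tendstoD(2) by blast
    then obtain N where "\<forall>k\<ge>N. cmod (Gdet n (\<lambda>i j. E (u k) $$ (i,j)) z) < (Re z)^n"
      by (auto simp: eventually_sequentially)
    then obtain k where "cmod (Gdet n (\<lambda>i j. E (u k) $$ (i,j)) z) < (Re z)^n" by blast
    then show False using bound[of k] by simp
  }
qed



lemma LM:
  assumes "degree p = n" "n \<ge> 1"
  shows "lead_minor (hurwitz_matrix p) (n - 1) = HD p n (n - 1)"
  unfolding lead_minor_def HD_def
proof (rule arg_cong[of _ _ det], rule eq_matI)
  fix i j assume ij: "i < dim_row (HM p n (n - 1))" "j < dim_col (HM p n (n - 1))"
  then have i: "i < n - 1" and j: "j < n - 1" by (auto simp: HM_def)
  have k: "int n - 2 * (int j + 1) + (int i + 1) = int n - 1 + int i - 2 * int j" by simp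
  show "mat (n - 1) (n - 1) (\<lambda>(i, j). hurwitz_matrix p $$ (i, j)) $$ (i, j) = HM p n (n - 1) $$ (i, j)"
    using i j assms unfolding hurwitz_matrix_def HM_def Let_def cf_def k
    by (auto simp: algebra_simps intro!: coeff_eq_0)
qed (auto simp: HM_def)

lemma vars_mult: "mpoly_vars (p * q) \<subseteq> mpoly_vars p \<union> mpoly_vars q"
proof
  fix i assume "i \<in> mpoly_vars (p * q)"
  then obtain mn where mn: "mn \<in> Poly_Mapping.keys (p * q)" "i \<in> Poly_Mapping.keys mn"
    unfolding mpoly_vars_def by auto
  then obtain a b where ab: "mn = a + b" "a \<in> Poly_Mapping.keys p" "b \<in> Poly_Mapping.keys q"
    using keys_mult[of p q] by blast
  then have "i \<in> Poly_Mapping.keys a \<union> Poly_Mapping.keys b" using mn(2) keys_add[of a b] by auto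
  then show "i \<in> mpoly_vars p \<union> mpoly_vars q" using ab unfolding mpoly_vars_def by auto
qed

lemma link:
  assumes vars: "mpoly_vars f \<subseteq> {1..m}" and bounds: "\<forall>k\<in>{1..m}. ql k < qu k"
  shows "(\<forall>\<theta>. \<theta> permutes {1..m} \<longrightarrow> (\<forall>t\<in>std_simplex m.
            mpoly_eval (homogenize (affine_change ql qu f)) (vec_point m (vertex_matrix m \<theta> *\<^sub>v t)) > 0))
     \<longleftrightarrow> (\<forall>q\<in>box m ql qu. mpoly_eval f q > 0)"
proof -
  have main: "mpoly_eval (homogenize (affine_change ql qu f)) (vec_point m (vertex_matrix m \<theta> *\<^sub>v t))
      = mpoly_eval f (\<lambda>k. if k \<in> {1..m} then ql k + (qu k - ql k) * vec_point m (vertex_matrix m \<theta> *\<^sub>v t) k else 0)"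
    if t: "t \<in> std_simplex m" for \<theta> t
  proof -
    let ?y = "vec_point m (vertex_matrix m \<theta> *\<^sub>v t)"
    have "mpoly_eval (homogenize (affine_change ql qu f)) ?y = mpoly_eval (affine_change ql qu f) ?y"
      by (rule eval_homogenize[of ?y]) (rule cover1(1)[OF t])
    also have "\<dots> = mpoly_eval f (\<lambda>k. ql k + (qu k - ql k) * ?y k)" by (rule eval_affine)
    also have "\<dots> = mpoly_eval f (\<lambda>k. if k \<in> {1..m} then ql k + (qu k - ql k) * ?y k else 0)"
      by (rule eval_vars[OF vars]) auto
    finally show ?thesis .
  qed
  have inbox: "(\<lambda>k. if k \<in> {1..m} then ql k + (qu k - ql k) * vec_point m (vertex_matrix m \<theta> *\<^sub>v t) k else 0)
      \<in> box m ql qu" if t: "t \<in> std_simplex m" for \<theta> t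
  proof -
    have b: "ql k \<le> ql k + (qu k - ql k) * vec_point m (vertex_matrix m \<theta> *\<^sub>v t) k \<and>
          ql k + (qu k - ql k) * vec_point m (vertex_matrix m \<theta> *\<^sub>v t) k \<le> qu k" if k: "k \<in> {1..m}" for k
    proof -
      let ?v = "vec_point m (vertex_matrix m \<theta> *\<^sub>v t) k"
      have v: "0 \<le> ?v" "?v \<le> 1" using cover1(2)[OF t k] by auto
      have d: "qu k - ql k > 0" using bounds k by auto
      have "0 \<le> (qu k - ql k) * ?v" using d v by simp
      moreover have "(qu k - ql k) * ?v \<le> (qu k - ql k) * 1"
        by (rule mult_left_mono) (use v d in auto)
      ultimately show ?thesis by simp
    qed
    show ?thesis unfolding box_def mem_Collect_eq
    proof (intro conjI ballI allI impI)
      fix k assume "k \<in> {1..m}"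
      then show "ql k \<le> (if k \<in> {1..m} then ql k + (qu k - ql k) * vec_point m (vertex_matrix m \<theta> *\<^sub>v t) k else 0)"
        "(if k \<in> {1..m} then ql k + (qu k - ql k) * vec_point m (vertex_matrix m \<theta> *\<^sub>v t) k else 0) \<le> qu k"
        using b by auto
    next
      fix k assume "k \<notin> {1..m}"
      then show "(if k \<in> {1..m} then ql k + (qu k - ql k) * vec_point m (vertex_matrix m \<theta> *\<^sub>v t) k else 0) = 0"
        by auto
    qed
  qed
  show ?thesis
  proof
    assume H: "\<forall>\<theta>. \<theta> permutes {1..m} \<longrightarrow> (\<forall>t\<in>std_simplex m.
            mpoly_eval (homogenize (affine_change ql qu f)) (vec_point m (vertex_matrix m \<theta> *\<^sub>v t)) > 0)"
    show "\<forall>q\<in>box m ql qu. mpoly_eval f q > 0"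
    proof
      fix q assume q: "q \<in> box m ql qu"
      define x where "x k = (q k - ql k) / (qu k - ql k)" for k
      have "\<forall>k\<in>{1..m}. 0 \<le> x k \<and> x k \<le> 1"
      proof
        fix k assume k: "k \<in> {1..m}"
        have d: "qu k - ql k > 0" using bounds k by auto
        have "ql k \<le> q k" "q k \<le> qu k" using q k unfolding box_def by auto
        then show "0 \<le> x k \<and> x k \<le> 1" unfolding x_def using d by (simp add: divide_le_eq_1)
      qed
      then obtain \<theta> t where th: "\<theta> permutes {1..m}" "t \<in> std_simplex m"
        "\<forall>k\<in>{1..m}. vec_point m (vertex_matrix m \<theta> *\<^sub>v t) k = x k"
        using cover2 by blast
      have "(\<lambda>k. if k \<in> {1..m} then ql k + (qu k - ql k) * vec_point m (vertex_matrix m \<theta> *\<^sub>v t) k else 0) = q"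
      proof
        fix k show "(if k \<in> {1..m} then ql k + (qu k - ql k) * vec_point m (vertex_matrix m \<theta> *\<^sub>v t) k else 0) = q k"
        proof (cases "k \<in> {1..m}")
          case True
          then have "ql k < qu k" using bounds by blast
          then have "qu k - ql k \<noteq> 0" by simp
          then show ?thesis using True th(3) unfolding x_def by auto
        next
          case False then show ?thesis using q unfolding box_def by auto
        qed
      qed
      moreover have "mpoly_eval (homogenize (affine_change ql qu f)) (vec_point m (vertex_matrix m \<theta> *\<^sub>v t)) > 0"
        using H th(1,2) by blast
      ultimately show "mpoly_eval f q > 0" unfolding main[OF th(2)] by simp
    qed
  next
    assume H: "\<forall>q\<in>box m ql qu. mpoly_eval f q > 0"
    show "\<forall>\<theta>. \<theta> permutes {1..m} \<longrightarrow> (\<forall>t\<in>std_simplex m.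
            mpoly_eval (homogenize (affine_change ql qu f)) (vec_point m (vertex_matrix m \<theta> *\<^sub>v t)) > 0)"
    proof (intro allI impI ballI)
      fix \<theta> t assume t: "t \<in> std_simplex m"
      show "mpoly_eval (homogenize (affine_change ql qu f)) (vec_point m (vertex_matrix m \<theta> *\<^sub>v t)) > 0"
        unfolding main[OF t] by (rule H[rule_format, OF inbox[OF t]])
    qed
  qed
qed



lemma eval_cont: "continuous_on S (\<lambda>s. mpoly_eval p (\<lambda>k. a k + s * b k))"
  unfolding mpoly_eval_def by (intro continuous_intros)

lemma seg_in_box:
  assumes q0: "q0 \<in> box m ql qu" and q: "q \<in> box m ql qu" and s: "s \<in> {0..1}"
  shows "(\<lambda>k. q0 k + s * (q k - q0 k)) \<in> box m ql qu"
proof -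
  have b: "ql k \<le> q0 k + s * (q k - q0 k) \<and> q0 k + s * (q k - q0 k) \<le> qu k" if k: "k \<in> {1..m}" for k
  proof -
    have e: "q0 k + s * (q k - q0 k) = (1 - s) * q0 k + s * q k" by (simp add: algebra_simps)
    have h: "ql k \<le> q0 k" "q0 k \<le> qu k" "ql k \<le> q k" "q k \<le> qu k" using q0 q k unfolding box_def by auto
    have s0: "0 \<le> s" "0 \<le> 1 - s" using s by auto
    have "(1 - s) * ql k \<le> (1 - s) * q0 k" "s * ql k \<le> s * q k"
      "(1 - s) * q0 k \<le> (1 - s) * qu k" "s * q k \<le> s * qu k"
      using h s0 by (auto intro: mult_left_mono)
    moreover have "(1 - s) * ql k + s * ql k = ql k" "(1 - s) * qu k + s * qu k = qu k"
      by (simp_all add: algebra_simps)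
    ultimately show ?thesis unfolding e by linarith
  qed
  show ?thesis unfolding box_def mem_Collect_eq
  proof (intro conjI ballI allI impI)
    fix k assume "k \<in> {1..m}"
    then show "ql k \<le> q0 k + s * (q k - q0 k)" "q0 k + s * (q k - q0 k) \<le> qu k" using b by auto
  next
    fix k assume "k \<notin> {1..m}"
    then show "q0 k + s * (q k - q0 k) = 0" using q0 q unfolding box_def by auto
  qed
qed

theorem lemma1:
  fixes n m :: nat
    and ql qu :: "nat \<Rightarrow> real"
    and P R :: "nat \<Rightarrow> nat \<Rightarrow> mpoly"
    and N1 D1 N2 D2 :: mpoly
    and A :: "(nat \<Rightarrow> real) \<Rightarrow> real mat"
  assumes n2: "n \<ge> 2" and m1: "m \<ge> 1"
    and bounds: "\<forall>k\<in>{1..m}. ql k < qu k"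
    and varsPR: "\<forall>i<n. \<forall>j<n. mpoly_vars (P i j) \<subseteq> {1..m} \<and> mpoly_vars (R i j) \<subseteq> {1..m}"
    and denR: "\<forall>i<n. \<forall>j<n. \<forall>q\<in>box m ql qu. mpoly_eval (R i j) q \<noteq> 0"
    and A_def: "\<forall>q. A q = mat n n (\<lambda>(i,j). mpoly_eval (P i j) q / mpoly_eval (R i j) q)"
    and stab_point: "\<exists>q\<in>box m ql qu. hurwitz_stable (A q)"
    and varsND: "mpoly_vars N1 \<subseteq> {1..m}" "mpoly_vars D1 \<subseteq> {1..m}"
                "mpoly_vars N2 \<subseteq> {1..m}" "mpoly_vars D2 \<subseteq> {1..m}"
    and denD: "\<forall>q\<in>box m ql qu. mpoly_eval D1 q \<noteq> 0 \<and> mpoly_eval D2 q \<noteq> 0"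
    and a0_eq: "\<forall>q\<in>box m ql qu.
                  coeff (char_poly (A q)) 0 = mpoly_eval N1 q / mpoly_eval D1 q"
    and Delta_eq: "\<forall>q\<in>box m ql qu.
                  lead_minor (hurwitz_matrix (char_poly (A q))) (n - 1)
                    = mpoly_eval N2 q / mpoly_eval D2 q"
  shows "(\<forall>q\<in>box m ql qu. hurwitz_stable (A q)) \<longleftrightarrow>
         (\<forall>f\<in>{N1 * D1, N2 * D2}. \<forall>\<theta>. \<theta> permutes {1..m} \<longrightarrow>
            (\<forall>t\<in>std_simplex m.
               mpoly_eval (homogenize (affine_change ql qu f))
                 (vec_point m (vertex_matrix m \<theta> *\<^sub>v t)) > 0))"
proof -
  have carrA: "A q \<in> carrier_mat n n" for q using A_def by simp
  have deg: "degree (char_poly (A q)) = n" and lc: "lead_coeff (char_poly (A q)) = 1" for q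
    using degree_monic_char_poly[OF carrA[of q]] by auto
  have n1: "n \<ge> 1" using n2 by simp
  have LMq: "lead_minor (hurwitz_matrix (char_poly (A q))) (n - 1) = HD (char_poly (A q)) n (n - 1)" for q
    by (rule LM[OF deg n1])
  have sgn: "(0 < a / d) \<longleftrightarrow> (0 < a * d)" for a d :: real
    by (simp add: zero_less_divide_iff zero_less_mult_iff)
  have e1: "mpoly_eval (N1 * D1) q > 0 \<longleftrightarrow> coeff (char_poly (A q)) 0 > 0" if "q \<in> box m ql qu" for q
    using a0_eq that by (simp add: eval_mult sgn)
  have e2: "mpoly_eval (N2 * D2) q > 0 \<longleftrightarrow> HD (char_poly (A q)) n (n - 1) > 0" if "q \<in> box m ql qu" for q
    using Delta_eq that LMq by (simp add: eval_mult sgn)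
  have vf1: "mpoly_vars (N1 * D1) \<subseteq> {1..m}" using vars_mult[of N1 D1] varsND by auto
  have vf2: "mpoly_vars (N2 * D2) \<subseteq> {1..m}" using vars_mult[of N2 D2] varsND by auto
  have RHS: "(\<forall>f\<in>{N1 * D1, N2 * D2}. \<forall>\<theta>. \<theta> permutes {1..m} \<longrightarrow>
            (\<forall>t\<in>std_simplex m.
               mpoly_eval (homogenize (affine_change ql qu f))
                 (vec_point m (vertex_matrix m \<theta> *\<^sub>v t)) > 0))
     \<longleftrightarrow> (\<forall>q\<in>box m ql qu. mpoly_eval (N1 * D1) q > 0) \<and> (\<forall>q\<in>box m ql qu. mpoly_eval (N2 * D2) q > 0)"
    using link[OF vf1 bounds] link[OF vf2 bounds] by auto
  have pos: "(\<forall>q\<in>box m ql qu. mpoly_eval (N1 * D1) q > 0) \<and> (\<forall>q\<in>box m ql qu. mpoly_eval (N2 * D2) q > 0)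
     \<longleftrightarrow> (\<forall>q\<in>box m ql qu. coeff (char_poly (A q)) 0 > 0 \<and> HD (char_poly (A q)) n (n - 1) > 0)"
    using e1 e2 by blast
  show ?thesis unfolding RHS pos
  proof
    assume st: "\<forall>q\<in>box m ql qu. hurwitz_stable (A q)"
    show "\<forall>q\<in>box m ql qu. coeff (char_poly (A q)) 0 > 0 \<and> HD (char_poly (A q)) n (n - 1) > 0"
    proof
      fix q assume q: "q \<in> box m ql qu"
      have ps: "pstable (char_poly (A q))" using st q hurwitz_pstable[OF carrA] by blast
      have "poly (char_poly (A q)) 0 > 0" by (rule pos_on_nonneg[OF ps lc]) (use deg n1 in auto)
      moreover have "HD (char_poly (A q)) n (n - 1) > 0" by (rule HD_pos[OF deg n1 lc ps])
      ultimately show "coeff (char_poly (A q)) 0 > 0 \<and> HD (char_poly (A q)) n (n - 1) > 0"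
        by (simp add: poly_0_coeff_0)
    qed
  next
    assume H: "\<forall>q\<in>box m ql qu. coeff (char_poly (A q)) 0 > 0 \<and> HD (char_poly (A q)) n (n - 1) > 0"
    obtain q0 where q0: "q0 \<in> box m ql qu" "hurwitz_stable (A q0)" using stab_point by blast
    have noim: "Re z \<noteq> 0" if "q \<in> box m ql qu" "eigenvalue (map_mat complex_of_real (A q)) z" for q z
    proof (rule no_imag_root[OF deg n2 lc])
      show "poly (char_poly (A q)) 0 \<noteq> 0" using H that(1) by (force simp: poly_0_coeff_0)
      show "HD (char_poly (A q)) n (n - 1) \<noteq> 0" using H that(1) by force
      show "poly (pc (char_poly (A q))) z = 0" using that(2) char_pc[OF carrA] by blast
    qed
    show "\<forall>q\<in>box m ql qu. hurwitz_stable (A q)"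
    proof
      fix q assume q: "q \<in> box m ql qu"
      define \<gamma> where "\<gamma> s = (\<lambda>k. q0 k + s * (q k - q0 k))" for s
      have gb: "\<gamma> s \<in> box m ql qu" if "s \<in> {0..1}" for s
        unfolding \<gamma>_def by (rule seg_in_box[OF q0(1) q that])
      have "\<forall>s\<in>{0..1}. hurwitz_stable (A (\<gamma> s))"
      proof (rule segment_stable)
        show "\<And>s. s \<in> {0..1} \<Longrightarrow> A (\<gamma> s) \<in> carrier_mat n n" by (rule carrA)
        show "continuous_on {0..1} (\<lambda>s. A (\<gamma> s) $$ (i, j))" if ij: "i < n" "j < n" for i j
        proof -
          have "continuous_on {0..1} (\<lambda>s. mpoly_eval (P i j) (\<gamma> s) / mpoly_eval (R i j) (\<gamma> s))"
            unfolding \<gamma>_def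
            by (intro continuous_on_divide eval_cont) (use denR ij gb in \<open>auto simp: \<gamma>_def\<close>)
          then show ?thesis
            by (rule continuous_on_cong[THEN iffD1, rotated 2]) (use A_def ij in auto)
        qed
        show "\<And>s z. s \<in> {0..1} \<Longrightarrow> eigenvalue (map_mat complex_of_real (A (\<gamma> s))) z \<Longrightarrow> Re z \<noteq> 0"
          using noim gb by blast
        have "\<gamma> 0 = q0" unfolding \<gamma>_def by simp
        then show "hurwitz_stable (A (\<gamma> 0))" using q0(2) by simp
      qed
      moreover have "\<gamma> 1 = q" unfolding \<gamma>_def by simp
      ultimately show "hurwitz_stable (A q)" by force
    qed
  qed
qed


end
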